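(* Let $f(x)=\sum_{n=0}^\infty \frac{a_n}{n!}x^n$ be given by a power series, and let $x>0$. Assuming that $\ln\partial_x$ (defined in the context below) commutes with the summation, i.e. $(\ln\partial_x) f(x) = \sum_{n=0}^\infty \frac{a_n}{n!}(\ln\partial_x)x^n$, one has $$(\ln\partial_x)\, f(x) = -(\gamma+\ln x)\, f(x) + \sum_{n=0}^\infty \frac{a_n}{n!}\, h_n\, x^n,$$ where $\gamma$ is the Euler–Mascheroni constant and $h_n=\sum_{k=1}^n\frac1k$ (with $h_0=0$).
   Context: For real $\nu$, $x>0$ and $\mu\ge 0$, the fractional derivative of a power is defined by $\partial_x^\nu x^\mu = \frac{\Gamma(\mu+1)}{\Gamma(\mu-\nu+1)}\,x^{\mu-\nu}$. The logarithm of the derivative operator is defined on powers by $(\ln\partial_x)\,x^\mu := \lim_{\nu\to 0}\frac{\partial_x^\nu x^\mu - x^\mu}{\nu}$. *)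

theory Defs
  imports "HOL-Analysis.Analysis"
begin

definition frac_deriv_pow :: "real \<Rightarrow> real \<Rightarrow> real \<Rightarrow> real" where
  "frac_deriv_pow \<nu> \<mu> x = Gamma (\<mu> + 1) / Gamma (\<mu> - \<nu> + 1) * x powr (\<mu> - \<nu>)"

definition ln_deriv_pow :: "real \<Rightarrow> real \<Rightarrow> real" where
  "ln_deriv_pow \<mu> x = Lim (at 0) (\<lambda>\<nu>. (frac_deriv_pow \<nu> \<mu> x - x powr \<mu>) / \<nu>)"

end

theory Submission
  imports Defs
begin

lemma ln_deriv_pow_nat:
  assumes x: "x > 0"
  shows "ln_deriv_pow (real n) x = (harm n - euler_mascheroni - ln x) * x ^ n"
proof -
  define g where "g = (\<lambda>\<nu>. Gamma (real n + 1) * rGamma (real n - \<nu> + 1) * x powr (real n - \<nu>))"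
  have eq: "frac_deriv_pow \<nu> (real n) x = g \<nu>" for \<nu>
    by (simp add: frac_deriv_pow_def g_def rGamma_inverse_Gamma divide_inverse)
  have nn: "real n - 0 + 1 \<notin> \<int>\<^sub>\<le>\<^sub>0"
  proof
    assume "real n - 0 + 1 \<in> \<int>\<^sub>\<le>\<^sub>0"
    hence "real n - 0 + 1 \<le> 0" by (rule nonpos_Ints_nonpos)
    thus False by simp
  qed
  have d1: "((\<lambda>\<nu>. rGamma (real n - \<nu> + 1)) has_field_derivative
       (- rGamma (real n - 0 + 1) * Digamma (real n - 0 + 1)) * (-1)) (at 0)"
  proof (rule DERIV_chain2[of rGamma _ "\<lambda>\<nu>. real n - \<nu> + 1" 0])
    show "(rGamma has_field_derivative - rGamma (real n - 0 + 1) * Digamma (real n - 0 + 1)) (at (real n - 0 + 1))"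
      by (rule has_field_derivative_rGamma_no_nonpos_int[OF nn])
    show "((\<lambda>\<nu>. real n - \<nu> + 1) has_field_derivative -1) (at 0)"
      by (auto intro!: derivative_eq_intros)
  qed
  have d2: "((\<lambda>\<nu>. x powr (real n - \<nu>)) has_field_derivative x powr (real n - 0) * ((-1) * ln x)) (at 0)"
    using x by (auto intro!: derivative_eq_intros)
  have G0: "Gamma (real n + 1) * rGamma (real n + 1) = 1"
  proof -
    have "Gamma (real n + 1) > 0" by (rule Gamma_real_pos) simp
    hence "Gamma (real n + 1) \<noteq> 0" by linarith
    thus ?thesis unfolding rGamma_inverse_Gamma by (rule right_inverse)
  qed
  have "(g has_field_derivative (harm n - euler_mascheroni - ln x) * x ^ n) (at 0)"
  proof -
    have gfun: "g = (\<lambda>\<nu>. Gamma (real n + 1) * (rGamma (real n - \<nu> + 1) * x powr (real n - \<nu>)))"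
      by (simp add: g_def fun_eq_iff mult.assoc)
    note h = DERIV_cmult[OF DERIV_mult[OF d1 d2], of "Gamma (real n + 1)", folded gfun]
    have D: "(g has_field_derivative Gamma (real n + 1) * (rGamma (real n + 1) * Digamma (real n + 1) * x ^ n - rGamma (real n + 1) * x ^ n * ln x)) (at 0)"
      by (rule DERIV_cong[OF h]) (use x in \<open>simp add: powr_realpow algebra_simps\<close>)
    moreover have "Digamma (real n + 1) = harm n - euler_mascheroni"
      using Digamma_of_nat[where 'a=real, of n] by (simp add: add.commute)
    have "Gamma (real n + 1) * (rGamma (real n + 1) * Digamma (real n + 1) * x ^ n - rGamma (real n + 1) * x ^ n * ln x)
      = (Gamma (real n + 1) * rGamma (real n + 1)) * (Digamma (real n + 1) - ln x) * x ^ n"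
      by (simp add: algebra_simps)
    also have "\<dots> = (harm n - euler_mascheroni - ln x) * x ^ n"
      using G0 \<open>Digamma (real n + 1) = harm n - euler_mascheroni\<close> by simp
    finally show ?thesis using D by simp
  qed
  moreover have "g 0 = x ^ n"
    using G0 x by (simp add: g_def powr_realpow)
  ultimately have "((\<lambda>\<nu>. (g \<nu> - x ^ n) / \<nu>) \<longlongrightarrow> (harm n - euler_mascheroni - ln x) * x ^ n) (at 0)"
    by (simp add: has_field_derivative_iff)
  hence "((\<lambda>\<nu>. (frac_deriv_pow \<nu> (real n) x - x powr real n) / \<nu>) \<longlongrightarrow> (harm n - euler_mascheroni - ln x) * x ^ n) (at 0)"
    using x by (simp add: eq powr_realpow)
  thus ?thesis unfolding ln_deriv_pow_def by (intro tendsto_Lim) auto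
qed

theorem mainTheorem3:
  fixes a :: "nat \<Rightarrow> real" and f :: "real \<Rightarrow> real" and x L :: real
  assumes "x > 0"
    and "(\<lambda>n. a n / fact n * x ^ n) sums f x"
    and "(\<lambda>n. a n / fact n * ln_deriv_pow (real n) x) sums L"
  shows "L = - (euler_mascheroni + ln x) * f x + (\<Sum>n. a n / fact n * harm n * x ^ n)"
proof -
  have L: "(\<lambda>n. a n / fact n * harm n * x ^ n - (euler_mascheroni + ln x) * (a n / fact n * x ^ n)) sums L"
    proof -
    have "\<And>n. a n / fact n * ln_deriv_pow (real n) x = a n / fact n * harm n * x ^ n - (euler_mascheroni + ln x) * (a n / fact n * x ^ n)"
      by (simp add: ln_deriv_pow_nat[OF assms(1)] algebra_simps add_divide_distrib)
    thus ?thesis using assms(3) by simp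
  qed
  have F: "(\<lambda>n. (euler_mascheroni + ln x) * (a n / fact n * x ^ n)) sums ((euler_mascheroni + ln x) * f x)"
    using sums_mult[OF assms(2)] .
  have "(\<lambda>n. a n / fact n * harm n * x ^ n) sums (L + (euler_mascheroni + ln x) * f x)"
    using sums_add[OF L F] by simp
  thus ?thesis by (simp add: sums_iff algebra_simps)
qed

end
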